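(* Let $(S,K,I)$ be an active split graph with $\alpha=|I|$ and $\omega=|K|$, and suppose $\Phi(S)$ is simple and connected. Then: (1) $\omega\le\alpha$; (2) $S$ and $\Phi(S)$ have the same clique number; (3) if $\Phi(S)$ is complete, then $\deg(S)=\binom{\alpha}{2}$; (4) if $\Phi(S)$ is not complete, then $\left\lceil \tfrac{\alpha}{2}(\omega-1)\right\rceil\le \deg(S)<\binom{\alpha}{2}$.
   Context: All graphs are finite and simple. A split graph is a graph $S$ whose vertex set is a disjoint union $V(S)=K\,\dot\cup\,I$ with $K$ a clique and $I$ an independent set; $(K,I)$ is called a bipartition of $S$, and $(S,K,I)$ denotes $S$ together with this fixed bipartition. A 2-switch in a graph $G$ is performed on four distinct vertices $a,b,c,d$ with $ab,cd\in E(G)$ and $ac,bd\notin E(G)$: it deletes $ab,cd$ and adds $ac,bd$; $a,b,c,d$ are said to participate in it. A vertex is active in $G$ if it participates in some 2-switch on $G$; $G$ is active if all its vertices are active. For a split graph $(S,K,I)$ and distinct $u,v\in I$, $\sigma_{uv}(S)$ is the number of induced subgraphs of $S$ isomorphic to $P_4$ containing both $u$ and $v$. The factor graph $\Phi(S)$ is the loopless multigraph with vertex set $I$ having exactly $\sigma_{uv}(S)$ parallel edges between $u$ and $v$; it is simple if $\sigma_{uv}(S)\in\{0,1\}$ for all $u,v$. Graph notions (connected, complete, clique number, etc.) applied to $\Phi(S)$ refer to its underlying simple graph, in which $u\sim v$ iff $\sigma_{uv}(S)\ge1$. $\deg(S)$ denotes the number of induced subgraphs of $S$ isomorphic to $P_4$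 (equivalently, the number of 2-switches on $S$, or the number of edges of $\Phi(S)$ counted with multiplicity). *)

theory Defs
  imports Complex_Main
begin

definition simple_graph :: "'a set \<Rightarrow> ('a \<Rightarrow> 'a \<Rightarrow> bool) \<Rightarrow> bool" where
  "simple_graph V E \<longleftrightarrow> finite V \<and> (\<forall>x y. E x y \<longrightarrow> E y x)
     \<and> (\<forall>x. \<not> E x x) \<and> (\<forall>x y. E x y \<longrightarrow> x \<in> V \<and> y \<in> V)"

definition is_clique :: "('a \<Rightarrow> 'a \<Rightarrow> bool) \<Rightarrow> 'a set \<Rightarrow> bool" where
  "is_clique E C \<longleftrightarrow> (\<forall>x\<in>C. \<forall>y\<in>C. x \<noteq> y \<longrightarrow> E x y)"

definition is_independent :: "('a \<Rightarrow> 'a \<Rightarrow> bool) \<Rightarrow> 'a set \<Rightarrow> bool" where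
  "is_independent E A \<longleftrightarrow> (\<forall>x\<in>A. \<forall>y\<in>A. \<not> E x y)"

definition split_graph :: "'a set \<Rightarrow> ('a \<Rightarrow> 'a \<Rightarrow> bool) \<Rightarrow> 'a set \<Rightarrow> 'a set \<Rightarrow> bool" where
  "split_graph V E K I \<longleftrightarrow> simple_graph V E \<and> K \<union> I = V \<and> K \<inter> I = {}
     \<and> is_clique E K \<and> is_independent E I"

definition two_switch :: "'a set \<Rightarrow> ('a \<Rightarrow> 'a \<Rightarrow> bool) \<Rightarrow> 'a \<Rightarrow> 'a \<Rightarrow> 'a \<Rightarrow> 'a \<Rightarrow> bool" where
  "two_switch V E a b c d \<longleftrightarrow> a \<in> V \<and> b \<in> V \<and> c \<in> V \<and> d \<in> V \<and> distinct [a, b, c, d]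
     \<and> E a b \<and> E c d \<and> \<not> E a c \<and> \<not> E b d"

definition active_vertex :: "'a set \<Rightarrow> ('a \<Rightarrow> 'a \<Rightarrow> bool) \<Rightarrow> 'a \<Rightarrow> bool" where
  "active_vertex V E v \<longleftrightarrow> (\<exists>a b c d. two_switch V E a b c d \<and> v \<in> {a, b, c, d})"

definition active_graph :: "'a set \<Rightarrow> ('a \<Rightarrow> 'a \<Rightarrow> bool) \<Rightarrow> bool" where
  "active_graph V E \<longleftrightarrow> (\<forall>v\<in>V. active_vertex V E v)"

definition induces_P4 :: "('a \<Rightarrow> 'a \<Rightarrow> bool) \<Rightarrow> 'a set \<Rightarrow> bool" where
  "induces_P4 E X \<longleftrightarrow> (\<exists>a b c d. X = {a, b, c, d} \<and> distinct [a, b, c, d]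
     \<and> E a b \<and> E b c \<and> E c d \<and> \<not> E a c \<and> \<not> E b d \<and> \<not> E a d)"

definition deg :: "'a set \<Rightarrow> ('a \<Rightarrow> 'a \<Rightarrow> bool) \<Rightarrow> nat" where
  "deg V E = card {X. X \<subseteq> V \<and> induces_P4 E X}"

definition sigma :: "'a set \<Rightarrow> ('a \<Rightarrow> 'a \<Rightarrow> bool) \<Rightarrow> 'a \<Rightarrow> 'a \<Rightarrow> nat" where
  "sigma V E u v = card {X. X \<subseteq> V \<and> induces_P4 E X \<and> u \<in> X \<and> v \<in> X}"

text \<open>Underlying simple graph of the factor graph Phi(S), on vertex set I.\<close>
definition factor_adj :: "'a set \<Rightarrow> ('a \<Rightarrow> 'a \<Rightarrow> bool) \<Rightarrow> 'a set \<Rightarrow> 'a \<Rightarrow> 'a \<Rightarrow> bool" where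
  "factor_adj V E I u v \<longleftrightarrow> u \<in> I \<and> v \<in> I \<and> u \<noteq> v \<and> sigma V E u v \<ge> 1"

definition factor_simple :: "'a set \<Rightarrow> ('a \<Rightarrow> 'a \<Rightarrow> bool) \<Rightarrow> 'a set \<Rightarrow> bool" where
  "factor_simple V E I \<longleftrightarrow> (\<forall>u\<in>I. \<forall>v\<in>I. u \<noteq> v \<longrightarrow> sigma V E u v \<le> 1)"

definition graph_connected :: "'a set \<Rightarrow> ('a \<Rightarrow> 'a \<Rightarrow> bool) \<Rightarrow> bool" where
  "graph_connected V E \<longleftrightarrow>
     (\<forall>u\<in>V. \<forall>v\<in>V. (\<lambda>x y. x \<in> V \<and> y \<in> V \<and> E x y)\<^sup>*\<^sup>* u v)"

definition graph_complete :: "'a set \<Rightarrow> ('a \<Rightarrow> 'a \<Rightarrow> bool) \<Rightarrow> bool" where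
  "graph_complete V E \<longleftrightarrow> (\<forall>u\<in>V. \<forall>v\<in>V. u \<noteq> v \<longrightarrow> E u v)"

definition clique_number :: "'a set \<Rightarrow> ('a \<Rightarrow> 'a \<Rightarrow> bool) \<Rightarrow> nat" where
  "clique_number V E = Max {card C | C. C \<subseteq> V \<and> is_clique E C}"

end

theory Submission
  imports Defs
begin

definition nb :: "'a set \<Rightarrow> ('a \<Rightarrow> 'a \<Rightarrow> bool) \<Rightarrow> 'a \<Rightarrow> 'a set" where
  "nb K E u = {k \<in> K. E u k}"

lemma diff_single: "A - B = {a} \<longleftrightarrow> a \<in> A \<and> a \<notin> B \<and> (\<forall>x. x \<in> A \<longrightarrow> x \<notin> B \<longrightarrow> x = a)"
  by auto

lemma family_card:
  assumes fin: "finite K" and FK: "F \<subseteq> Pow K" and UF: "\<Union>F = K"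
    and out: "\<forall>k\<in>K. \<exists>C\<in>F. k \<notin> C" and Kne: "K \<noteq> {}"
    and near0: "\<And>A B. A \<in> F \<Longrightarrow> B \<in> F \<Longrightarrow> A \<noteq> B \<Longrightarrow> \<exists>a b. A - B = {a} \<and> B - A = {b}"
  shows "card F = card K"
proof -
  have near: "\<exists>a b. a \<in> A \<and> a \<notin> B \<and> (\<forall>x. x \<in> A \<longrightarrow> x \<notin> B \<longrightarrow> x = a)
     \<and> b \<in> B \<and> b \<notin> A \<and> (\<forall>x. x \<in> B \<longrightarrow> x \<notin> A \<longrightarrow> x = b)"
    if "A \<in> F" "B \<in> F" "A \<noteq> B" for A B
    using near0[OF that] unfolding diff_single by metis
  have inK: "x \<in> K" if "x \<in> C" "C \<in> F" for x C using that FK by blast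
  have "F \<noteq> {}" using UF Kne by auto
  then obtain A where A: "A \<in> F" by auto
  obtain B where B: "B \<in> F" "B \<noteq> A"
  proof (rule ccontr)
    assume "\<not> thesis"
    with that have "F = {A}" using A by auto
    then have "A = K" using UF by auto
    then show False using out Kne A \<open>F = {A}\<close> by auto
  qed
  obtain a b where ab: "a \<in> A" "a \<notin> B" "\<And>x. x \<in> A \<Longrightarrow> x \<notin> B \<Longrightarrow> x = a"
     "b \<in> B" "b \<notin> A" "\<And>x. x \<in> B \<Longrightarrow> x \<notin> A \<Longrightarrow> x = b"
    using near[OF A B(1)] B(2) by metis
  have claim: "(\<forall>m. m \<in> A \<longrightarrow> m \<in> B \<longrightarrow> m \<in> C) \<or> (\<forall>x. x \<in> C \<longrightarrow> x \<in> A \<or> x \<in> B)" if C: "C \<in> F" for C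
  proof (rule ccontr)
    assume nc: "\<not> ?thesis"
    then obtain m where m: "m \<in> A" "m \<in> B" "m \<notin> C" by auto
    from nc obtain x where x: "x \<in> C" "x \<notin> A" "x \<notin> B" by auto
    have "C \<noteq> A" "C \<noteq> B" using m by auto
    obtain y z where yz: "y \<in> A" "y \<notin> C" "\<And>x. x \<in> A \<Longrightarrow> x \<notin> C \<Longrightarrow> x = y"
       "z \<in> C" "z \<notin> A" "\<And>x. x \<in> C \<Longrightarrow> x \<notin> A \<Longrightarrow> x = z"
      using near[OF A C] \<open>C \<noteq> A\<close> by metis
    obtain y' where yz': "\<And>x. x \<in> B \<Longrightarrow> x \<notin> C \<Longrightarrow> x = y'"
      using near[OF B(1) C] \<open>C \<noteq> B\<close> by metis
    have "y' = m" using yz' m by metis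
    have "b \<noteq> m" using ab m by metis
    then have "b \<in> C" using yz' \<open>y' = m\<close> ab(4) by metis
    then have "z = b" using yz ab by metis
    have "x = z" using yz x by metis
    then show False using x \<open>z = b\<close> ab by metis
  qed
  have cases: "(\<forall>C\<in>F. \<forall>m. m \<in> A \<longrightarrow> m \<in> B \<longrightarrow> m \<in> C) \<or> (\<forall>C\<in>F. \<forall>x. x \<in> C \<longrightarrow> x \<in> A \<or> x \<in> B)"
  proof (rule ccontr)
    assume "\<not> ?thesis"
    then obtain C1 C2 m x where C1: "C1 \<in> F" "m \<in> A" "m \<in> B" "m \<notin> C1" and C2: "C2 \<in> F" "x \<in> C2" "x \<notin> A" "x \<notin> B"
      by blast
    have C1AB: "\<forall>x. x \<in> C1 \<longrightarrow> x \<in> A \<or> x \<in> B" using claim C1 by blast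
    have MC2: "m \<in> C2" using claim[OF C2(1)] C2 C1 by blast
    have "x \<notin> C1" using C1AB C2 by blast
    then have "C2 \<noteq> C1" using C2 by blast
    obtain w where w: "\<And>t. t \<in> C2 \<Longrightarrow> t \<notin> C1 \<Longrightarrow> t = w"
      using near[OF C2(1) C1(1)] \<open>C2 \<noteq> C1\<close> by metis
    have "x = w" using w C2 \<open>x \<notin> C1\<close> by metis
    moreover have "m = w" using w MC2 C1 by metis
    moreover have "x \<noteq> m" using C2 C1 by metis
    ultimately show False by simp
  qed
  show ?thesis
  proof (cases "\<forall>C\<in>F. \<forall>m. m \<in> A \<longrightarrow> m \<in> B \<longrightarrow> m \<in> C")
    case True
    have M0: "\<not> (m \<in> A \<and> m \<in> B)" for m
    proof
      assume m: "m \<in> A \<and> m \<in> B"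
      then have "m \<in> K" using inK A by blast
      then obtain C where "C \<in> F" "m \<notin> C" using out by blast
      then show False using True m by blast
    qed
    have Aa: "A = {a}" using ab M0 by blast
    have sing: "\<exists>c. C = {c}" if C: "C \<in> F" for C
    proof (cases "C = A")
      case True then show ?thesis using Aa by blast
    next
      case False
      obtain y z where yz: "y \<in> A" "y \<notin> C" "\<And>x. x \<in> A \<Longrightarrow> x \<notin> C \<Longrightarrow> x = y"
         "z \<in> C" "z \<notin> A" "\<And>x. x \<in> C \<Longrightarrow> x \<notin> A \<Longrightarrow> x = z"
        using near[OF A C] False by metis
      have "y = a" using yz Aa by simp
      have "C = {z}"
      proof
        show "C \<subseteq> {z}"
        proof
          fix t assume t: "t \<in> C"
          have "t \<notin> A" using t Aa yz(2) \<open>y = a\<close> by auto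
          then show "t \<in> {z}" using yz(6)[OF t] by simp
        qed
        show "{z} \<subseteq> C" using yz(4) by simp
      qed
      then show ?thesis by blast
    qed
    have "F = (\<lambda>k. {k}) ` K"
    proof
      show "F \<subseteq> (\<lambda>k. {k}) ` K"
      proof
        fix C assume "C \<in> F"
        then obtain c where "C = {c}" using sing by blast
        then show "C \<in> (\<lambda>k. {k}) ` K" using inK \<open>C \<in> F\<close> by blast
      qed
      show "(\<lambda>k. {k}) ` K \<subseteq> F"
      proof
        fix X assume "X \<in> (\<lambda>k. {k}) ` K"
        then obtain k where k: "k \<in> K" "X = {k}" by blast
        then obtain C where C: "C \<in> F" "k \<in> C" using UF by blast
        then obtain c where "C = {c}" using sing by blast
        then show "X \<in> F" using C k by simp
      qed
    qed
    moreover have "inj_on (\<lambda>k. {k}) K" by (auto simp: inj_on_def)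
    ultimately show ?thesis by (simp add: card_image)
  next
    case False
    then have all: "\<forall>C\<in>F. \<forall>x. x \<in> C \<longrightarrow> x \<in> A \<or> x \<in> B" using cases by blast
    have KAB: "K = A \<union> B"
    proof
      show "K \<subseteq> A \<union> B" using all UF by blast
      show "A \<union> B \<subseteq> K" using inK A B by blast
    qed
    have form: "\<exists>y\<in>K. C = K - {y}" if C: "C \<in> F" for C
    proof (cases "C = A")
      case True
      have "A = K - {b}"
      proof
        show "A \<subseteq> K - {b}" using KAB ab(5) by blast
        show "K - {b} \<subseteq> A"
        proof
          fix t assume t: "t \<in> K - {b}"
          show "t \<in> A"
          proof (rule ccontr)
            assume "t \<notin> A"
            then have "t \<in> B" using t KAB by blast
            then have "t = b" using ab(6) \<open>t \<notin> A\<close> by blast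
            then show False using t by blast
          qed
        qed
      qed
      moreover have "b \<in> K" using KAB ab by blast
      ultimately show ?thesis using True by blast
    next
      case False
      obtain y z where yz: "y \<in> A" "y \<notin> C" "\<And>x. x \<in> A \<Longrightarrow> x \<notin> C \<Longrightarrow> x = y"
         "z \<in> C" "z \<notin> A" "\<And>x. x \<in> C \<Longrightarrow> x \<notin> A \<Longrightarrow> x = z"
        using near[OF A C] False by metis
      have "z \<in> B" using all C yz(4,5) by blast
      then have "z = b" using ab(6) yz(5) by metis
      have "C = K - {y}"
      proof
        show "C \<subseteq> K - {y}" using inK C yz(2) by blast
        show "K - {y} \<subseteq> C"
        proof
          fix t assume t: "t \<in> K - {y}"
          show "t \<in> C"
          proof (cases "t \<in> A")
            case True then show ?thesis using yz(3) t by blast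
          next
            case False
            then have "t \<in> B" using t KAB by blast
            then have "t = b" using ab False by metis
            then show ?thesis using \<open>z = b\<close> yz(4) by simp
          qed
        qed
      qed
      moreover have "y \<in> K" using yz KAB by blast
      ultimately show ?thesis by blast
    qed
    have "F = (\<lambda>y. K - {y}) ` K"
    proof
      show "F \<subseteq> (\<lambda>y. K - {y}) ` K" using form by blast
      show "(\<lambda>y. K - {y}) ` K \<subseteq> F"
      proof
        fix X assume "X \<in> (\<lambda>y. K - {y}) ` K"
        then obtain k where k: "k \<in> K" "X = K - {k}" by blast
        then obtain C where C: "C \<in> F" "k \<notin> C" using out by blast
        then obtain y where y: "y \<in> K" "C = K - {y}" using form by blast
        then have "y = k" using C k by blast
        then show "X \<in> F" using C k y by simp
      qed
    qed
    moreover have "inj_on (\<lambda>y. K - {y}) K" by (auto simp: inj_on_def)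
    ultimately show ?thesis by (simp add: card_image)
  qed
qed

context
  fixes V K I :: "'a set" and E :: "'a \<Rightarrow> 'a \<Rightarrow> bool"
  assumes split: "split_graph V E K I"
begin

lemma finV: "finite V" using split unfolding split_graph_def simple_graph_def by blast
lemma symE: "E x y \<Longrightarrow> E y x" using split unfolding split_graph_def simple_graph_def by blast
lemma irrE: "\<not> E x x" using split unfolding split_graph_def simple_graph_def by blast
lemma inV: "E x y \<Longrightarrow> x \<in> V \<and> y \<in> V" using split unfolding split_graph_def simple_graph_def by blast
lemma KIV: "K \<union> I = V" using split unfolding split_graph_def by blast
lemma disjKI: "K \<inter> I = {}" using split unfolding split_graph_def by blast
lemma cliqK: "x \<in> K \<Longrightarrow> y \<in> K \<Longrightarrow> x \<noteq> y \<Longrightarrow> E x y"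
  using split unfolding split_graph_def is_clique_def by blast
lemma indI: "x \<in> I \<Longrightarrow> y \<in> I \<Longrightarrow> \<not> E x y"
  using split unfolding split_graph_def is_independent_def by blast
lemma finK: "finite K" using finV KIV by (metis finite_Un)
lemma finI: "finite I" using finV KIV by (metis finite_Un)
lemma inVKI: "x \<in> V \<Longrightarrow> x \<in> K \<or> x \<in> I" using KIV by blast
lemma KnI: "x \<in> K \<Longrightarrow> x \<notin> I" using disjKI by blast

lemma P4_struct:
  assumes "X \<subseteq> V" "induces_P4 E X"
  obtains u b c v where "X = {u,b,c,v}" "u \<in> I" "v \<in> I" "b \<in> K" "c \<in> K" "u \<noteq> v" "b \<noteq> c"
    "E u b" "E b c" "E c v" "\<not> E u c" "\<not> E b v"
proof -
  from assms(2) obtain a b c d where X: "X = {a,b,c,d}" "distinct [a,b,c,d]" "E a b" "E b c"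
    "E c d" "\<not> E a c" "\<not> E b d" "\<not> E a d" unfolding induces_P4_def by blast
  have V: "a \<in> V" "b \<in> V" "c \<in> V" "d \<in> V" using inV X by auto
  have aI: "a \<in> I"
  proof (rule ccontr)
    assume "a \<notin> I"
    then have "a \<in> K" using inVKI V by blast
    have "c \<in> I" using inVKI[OF V(3)] cliqK[of a c] \<open>a \<in> K\<close> X(2,6) by auto
    have "d \<in> I" using inVKI[OF V(4)] cliqK[of a d] \<open>a \<in> K\<close> X(2,8) by auto
    then show False using indI X \<open>c \<in> I\<close> by blast
  qed
  have dI: "d \<in> I"
  proof (rule ccontr)
    assume "d \<notin> I"
    then have "d \<in> K" using inVKI V by blast
    have "b \<in> I" using inVKI[OF V(2)] cliqK[of b d] \<open>d \<in> K\<close> X(2,7) by auto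
    have "a \<in> I" using inVKI[OF V(1)] cliqK[of a d] \<open>d \<in> K\<close> X(2,8) by auto
    then show False using indI X \<open>b \<in> I\<close> by blast
  qed
  have bK: "b \<in> K" using indI aI X inVKI V by blast
  have cK: "c \<in> K" using indI dI X inVKI V by blast
  show thesis by (rule that[of a b c d]) (use X aI dI bK cK in auto)
qed

lemma P4_inter: "b \<in> K \<Longrightarrow> c \<in> K \<Longrightarrow> u \<in> I \<Longrightarrow> v \<in> I \<Longrightarrow> {u,b,c,v} \<inter> I = {u,v}"
  using disjKI by blast

lemma mkP4:
  assumes uv: "u \<in> I" "v \<in> I" "u \<noteq> v"
    and b0: "b \<in> nb K E u - nb K E v" and c0: "c \<in> nb K E v - nb K E u"
  shows "{u,b,c,v} \<subseteq> V \<and> induces_P4 E {u,b,c,v}"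
proof -
  have b: "b \<in> K" "E u b" "\<not> E v b" using b0 unfolding nb_def by auto
  have c: "c \<in> K" "E v c" "\<not> E u c" using c0 unfolding nb_def by auto
  have "b \<noteq> c" using b c by blast
  then have bc: "E b c" using cliqK b c by blast
  have d: "distinct [u,b,c,v]" using b c uv KnI by auto
  have "induces_P4 E {u,b,c,v}" unfolding induces_P4_def
  proof (intro exI conjI)
    show "{u,b,c,v} = {u,b,c,v}" by (rule refl)
    show "distinct [u,b,c,v]" by (rule d)
    show "E u b" by (rule b(2))
    show "E b c" by (rule bc)
    show "\<not> E u c" by (rule c(3))
    show "E c v" using symE c(2) by blast
    show "\<not> E b v" using symE b(3) by blast
    show "\<not> E u v" using indI uv by blast
  qed
  moreover have "{u,b,c,v} \<subseteq> V" using KIV b c uv by blast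
  ultimately show ?thesis by blast
qed

lemma P4_exists_iff:
  assumes uv: "u \<in> I" "v \<in> I" "u \<noteq> v"
  shows "(\<exists>X. X \<subseteq> V \<and> induces_P4 E X \<and> u \<in> X \<and> v \<in> X) \<longleftrightarrow>
     (nb K E u - nb K E v \<noteq> {} \<and> nb K E v - nb K E u \<noteq> {})"
proof
  assume "\<exists>X. X \<subseteq> V \<and> induces_P4 E X \<and> u \<in> X \<and> v \<in> X"
  then obtain X where X: "X \<subseteq> V" "induces_P4 E X" "u \<in> X" "v \<in> X" by blast
  obtain u' b c v' where P: "X = {u',b,c,v'}" "u' \<in> I" "v' \<in> I" "b \<in> K" "c \<in> K" "u' \<noteq> v'" "b \<noteq> c"
    "E u' b" "E b c" "E c v'" "\<not> E u' c" "\<not> E b v'" using P4_struct[OF X(1,2)] by blast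
  have XI: "X \<inter> I = {u',v'}" using P4_inter[OF P(4,5,2,3)] P(1) by simp
  have "u \<in> {u',v'}" using XI X uv by blast
  have "v \<in> {u',v'}" using XI X uv by blast
  have "(u = u' \<and> v = v') \<or> (u = v' \<and> v = u')" using \<open>u \<in> {u',v'}\<close> \<open>v \<in> {u',v'}\<close> uv by blast
  then show "nb K E u - nb K E v \<noteq> {} \<and> nb K E v - nb K E u \<noteq> {}"
    using P symE unfolding nb_def by blast
next
  assume "nb K E u - nb K E v \<noteq> {} \<and> nb K E v - nb K E u \<noteq> {}"
  then obtain b c where b: "b \<in> nb K E u - nb K E v" and c: "c \<in> nb K E v - nb K E u" by blast
  have "{u,b,c,v} \<subseteq> V \<and> induces_P4 E {u,b,c,v}" by (rule mkP4[OF uv b c])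
  moreover have "u \<in> {u,b,c,v}" "v \<in> {u,b,c,v}" by simp_all
  ultimately have "{u,b,c,v} \<subseteq> V \<and> induces_P4 E {u,b,c,v} \<and> u \<in> {u,b,c,v} \<and> v \<in> {u,b,c,v}"
    by blast
  then show "\<exists>X. X \<subseteq> V \<and> induces_P4 E X \<and> u \<in> X \<and> v \<in> X"
    by (rule exI)
qed

lemma fin_sig: "finite {X. X \<subseteq> V \<and> P X}"
proof (rule finite_subset[of _ "Pow V"])
  show "{X. X \<subseteq> V \<and> P X} \<subseteq> Pow V" by blast
  show "finite (Pow V)" using finV by simp
qed

lemma adj_iff_P4:
  "factor_adj V E I u v \<longleftrightarrow> u \<in> I \<and> v \<in> I \<and> u \<noteq> v \<and> (\<exists>X. X \<subseteq> V \<and> induces_P4 E X \<and> u \<in> X \<and> v \<in> X)"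
proof -
  have "1 \<le> sigma V E u v \<longleftrightarrow> {X. X \<subseteq> V \<and> induces_P4 E X \<and> u \<in> X \<and> v \<in> X} \<noteq> {}"
    unfolding sigma_def using fin_sig[of "\<lambda>X. induces_P4 E X \<and> u \<in> X \<and> v \<in> X"]
    by (simp add: Suc_le_eq card_gt_0_iff)
  then show ?thesis unfolding factor_adj_def by blast
qed

lemma adj_iff_nb:
  "factor_adj V E I u v \<longleftrightarrow> u \<in> I \<and> v \<in> I \<and> u \<noteq> v \<and>
      nb K E u - nb K E v \<noteq> {} \<and> nb K E v - nb K E u \<noteq> {}"
  using adj_iff_P4[of u v] P4_exists_iff[of u v] by blast

lemma sw_K:
  assumes sw: "two_switch V E a b c d" and aK: "a \<in> K"
  shows "(\<exists>v\<in>I. \<not> E v a) \<and> (\<exists>u\<in>I. E u a)"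
proof -
  have s: "a \<in> V" "b \<in> V" "c \<in> V" "d \<in> V" "distinct [a,b,c,d]" "E a b" "E c d" "\<not> E a c" "\<not> E b d"
    using sw unfolding two_switch_def by auto
  have cI: "c \<in> I"
  proof (rule ccontr)
    assume "c \<notin> I" then have "c \<in> K" using inVKI s(3) by blast
    then have "E a c" using cliqK aK s(5) by auto
    then show False using s(8) by blast
  qed
  have dK: "d \<in> K"
  proof (rule ccontr)
    assume "d \<notin> K" then have "d \<in> I" using inVKI s(4) by blast
    then show False using indI cI s(7) by blast
  qed
  have bI: "b \<in> I"
  proof (rule ccontr)
    assume "b \<notin> I" then have "b \<in> K" using inVKI s(2) by blast
    then have "E b d" using cliqK dK s(5) by auto
    then show False using s(9) by blast
  qed
  have "\<not> E c a" using s(8) symE by blast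
  moreover have "E b a" using s(6) symE by blast
  ultimately show ?thesis using cI bI by blast
qed

lemma sw_I:
  assumes sw: "two_switch V E a b c d" and aI: "a \<in> I"
  shows "\<exists>k\<in>K. \<not> E a k"
proof -
  have s: "a \<in> V" "b \<in> V" "c \<in> V" "d \<in> V" "distinct [a,b,c,d]" "E a b" "E c d" "\<not> E a c" "\<not> E b d"
    using sw unfolding two_switch_def by auto
  have bK: "b \<in> K"
  proof (rule ccontr)
    assume "b \<notin> K" then have "b \<in> I" using inVKI s(2) by blast
    then show False using indI aI s(6) by blast
  qed
  have dI: "d \<in> I"
  proof (rule ccontr)
    assume "d \<notin> I" then have "d \<in> K" using inVKI s(4) by blast
    then have "E b d" using cliqK bK s(5) by auto
    then show False using s(9) by blast
  qed
  have cK: "c \<in> K"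
  proof (rule ccontr)
    assume "c \<notin> K" then have "c \<in> I" using inVKI s(3) by blast
    then show False using indI dI s(7) by blast
  qed
  show ?thesis using cK s(8) by blast
qed

lemma sw_perm:
  assumes "two_switch V E a b c d"
  shows "two_switch V E b a d c" "two_switch V E c d a b" "two_switch V E d c b a"
  using assms symE unfolding two_switch_def by auto

context
  assumes active: "active_graph V E"
begin

lemma act_sw: "x \<in> V \<Longrightarrow> \<exists>a b c d. two_switch V E a b c d \<and> (x = a \<or> x = b \<or> x = c \<or> x = d)"
  using active unfolding active_graph_def active_vertex_def by blast

lemma actK: assumes "k \<in> K" shows "(\<exists>v\<in>I. \<not> E v k) \<and> (\<exists>u\<in>I. E u k)"
proof -
  have "k \<in> V" using assms KIV by blast
  then obtain a b c d where sw: "two_switch V E a b c d" and x: "k = a \<or> k = b \<or> k = c \<or> k = d"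
    using act_sw by blast
  from x show ?thesis
  proof (elim disjE)
    assume "k = a" then show ?thesis using sw_K[OF sw] assms by blast
  next
    assume "k = b" then show ?thesis using sw_K[OF sw_perm(1)[OF sw]] assms by blast
  next
    assume "k = c" then show ?thesis using sw_K[OF sw_perm(2)[OF sw]] assms by blast
  next
    assume "k = d" then show ?thesis using sw_K[OF sw_perm(3)[OF sw]] assms by blast
  qed
qed

lemma actI: assumes "u \<in> I" shows "\<exists>k\<in>K. \<not> E u k"
proof -
  have "u \<in> V" using assms KIV by blast
  then obtain a b c d where sw: "two_switch V E a b c d" and x: "u = a \<or> u = b \<or> u = c \<or> u = d"
    using act_sw by blast
  from x show ?thesis
  proof (elim disjE)
    assume "u = a" then show ?thesis using sw_I[OF sw] assms by blast
  next
    assume "u = b" then show ?thesis using sw_I[OF sw_perm(1)[OF sw]] assms by blast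
  next
    assume "u = c" then show ?thesis using sw_I[OF sw_perm(2)[OF sw]] assms by blast
  next
    assume "u = d" then show ?thesis using sw_I[OF sw_perm(3)[OF sw]] assms by blast
  qed
qed

lemma Vne: assumes "V \<noteq> {}" shows "K \<noteq> {}" "I \<noteq> {}"
proof -
  obtain x where "x \<in> V" using assms by blast
  then have "x \<in> K \<or> x \<in> I" using inVKI by blast
  then have "K \<noteq> {} \<and> I \<noteq> {}"
  proof
    assume "x \<in> K" then show ?thesis using actK by blast
  next
    assume "x \<in> I" then show ?thesis using actI by blast
  qed
  then show "K \<noteq> {}" "I \<noteq> {}" by auto
qed

end

lemma finnb: "finite (nb K E u)" using finK unfolding nb_def by simp

lemma card_near:
  assumes "finite A" "finite B" "A - B = {a}" "B - A = {b}"
  shows "card A = card B"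
proof -
  have "card A = card (A \<inter> B) + card (A - B)" using assms(1) by (rule card_Int_Diff)
  moreover have "card B = card (B \<inter> A) + card (B - A)" using assms(2) by (rule card_Int_Diff)
  ultimately show ?thesis using assms(3,4) by (simp add: Int_commute)
qed

context
  assumes simpl: "factor_simple V E I"
begin

lemma uniq:
  assumes uv: "u \<in> I" "v \<in> I" "u \<noteq> v"
    and b: "b \<in> nb K E u - nb K E v" and b': "b' \<in> nb K E u - nb K E v"
    and c: "c \<in> nb K E v - nb K E u"
  shows "b = b'"
proof -
  let ?S = "{X. X \<subseteq> V \<and> induces_P4 E X \<and> u \<in> X \<and> v \<in> X}"
  have fin: "finite ?S" by (rule fin_sig)
  have "sigma V E u v \<le> 1" using simpl uv unfolding factor_simple_def by blast
  then have le: "card ?S \<le> Suc 0" unfolding sigma_def by simp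
  have m1: "{u,b,c,v} \<in> ?S" using mkP4[OF uv b c] by simp
  have m2: "{u,b',c,v} \<in> ?S" using mkP4[OF uv b' c] by simp
  have all: "\<forall>x\<in>?S. \<forall>y\<in>?S. x = y" using card_le_Suc0_iff_eq[OF fin] le by simp
  have eq: "{u,b,c,v} = {u,b',c,v}" using bspec[OF bspec[OF all m1] m2] .
  have "b' \<in> K" "E u b'" using b' unfolding nb_def by auto
  moreover have "\<not> E u c" using c unfolding nb_def by auto
  ultimately have "b' \<noteq> u" "b' \<noteq> v" "b' \<noteq> c" using uv KnI by auto
  have "b' \<in> {u,b',c,v}" by simp
  then have "b' \<in> {u,b,c,v}" by (simp only: eq)
  then show ?thesis using \<open>b' \<noteq> u\<close> \<open>b' \<noteq> v\<close> \<open>b' \<noteq> c\<close> by simp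
qed

lemma adj_near:
  assumes "factor_adj V E I u v"
  shows "\<exists>a b. nb K E u - nb K E v = {a} \<and> nb K E v - nb K E u = {b}"
proof -
  have uv: "u \<in> I" "v \<in> I" "u \<noteq> v" and ne: "nb K E u - nb K E v \<noteq> {}" "nb K E v - nb K E u \<noteq> {}"
    using assms adj_iff_nb[of u v] by auto
  obtain a where a: "a \<in> nb K E u - nb K E v" using ne by blast
  obtain b where b: "b \<in> nb K E v - nb K E u" using ne by blast
  have "nb K E u - nb K E v = {a}"
  proof
    show "nb K E u - nb K E v \<subseteq> {a}" using uniq[OF uv a _ b] by blast
    show "{a} \<subseteq> nb K E u - nb K E v" using a by blast
  qed
  moreover have "nb K E v - nb K E u = {b}"
  proof
    show "nb K E v - nb K E u \<subseteq> {b}" using uniq[OF uv(2,1) uv(3)[symmetric] b _ a] by blast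
    show "{b} \<subseteq> nb K E v - nb K E u" using b by blast
  qed
  ultimately show ?thesis by blast
qed

lemma adj_card: "factor_adj V E I u v \<Longrightarrow> card (nb K E u) = card (nb K E v)"
proof -
  assume "factor_adj V E I u v"
  then obtain a b where "nb K E u - nb K E v = {a}" "nb K E v - nb K E u = {b}" using adj_near by blast
  then show ?thesis using card_near[OF finnb finnb] by blast
qed

context
  assumes conn: "graph_connected I (factor_adj V E I)"
begin

lemma card_const:
  assumes "u \<in> I" "v \<in> I"
  shows "card (nb K E u) = card (nb K E v)"
proof -
  have "(\<lambda>x y. x \<in> I \<and> y \<in> I \<and> factor_adj V E I x y)\<^sup>*\<^sup>* u v"
    using conn assms unfolding graph_connected_def by blast
  then show ?thesis
  proof (induction rule: rtranclp_induct)
    case base then show ?case by simp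
  next
    case (step y z)
    then show ?case using adj_card[of y z] by simp
  qed
qed

lemma adj_iff_ne:
  assumes "u \<in> I" "v \<in> I" "u \<noteq> v"
  shows "factor_adj V E I u v \<longleftrightarrow> nb K E u \<noteq> nb K E v"
proof
  assume "factor_adj V E I u v"
  then show "nb K E u \<noteq> nb K E v" using adj_iff_nb[of u v] by auto
next
  assume ne: "nb K E u \<noteq> nb K E v"
  have c: "card (nb K E u) = card (nb K E v)" using card_const assms by blast
  have "nb K E u - nb K E v \<noteq> {}"
  proof
    assume "nb K E u - nb K E v = {}"
    then have "nb K E u \<subseteq> nb K E v" by blast
    then have "nb K E u = nb K E v" using card_subset_eq[OF finnb] c by blast
    then show False using ne by blast
  qed
  moreover have "nb K E v - nb K E u \<noteq> {}"
  proof
    assume "nb K E v - nb K E u = {}"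
    then have "nb K E v \<subseteq> nb K E u" by blast
    then have "nb K E v = nb K E u" using card_subset_eq[OF finnb] c by metis
    then show False using ne by blast
  qed
  ultimately show "factor_adj V E I u v" using adj_iff_nb[of u v] assms by blast
qed

end

end

context
  assumes active: "active_graph V E" and simpl: "factor_simple V E I"
    and conn: "graph_connected I (factor_adj V E I)"
begin

lemma adjF: "u \<in> I \<Longrightarrow> v \<in> I \<Longrightarrow> u \<noteq> v \<Longrightarrow> factor_adj V E I u v \<longleftrightarrow> nb K E u \<noteq> nb K E v"
  by (rule adj_iff_ne[OF simpl conn])

lemma adj_dom: "factor_adj V E I u v \<Longrightarrow> u \<in> I \<and> v \<in> I \<and> u \<noteq> v"
  unfolding factor_adj_def by blast

lemma nbK: "nb K E u \<subseteq> K" unfolding nb_def by blast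

lemma cardF: assumes "V \<noteq> {}" shows "card (nb K E ` I) = card K"
proof (rule family_card)
  show "finite K" by (rule finK)
  show "nb K E ` I \<subseteq> Pow K" using nbK by blast
  show "K \<noteq> {}" using Vne[OF active assms] by blast
  show "\<Union> (nb K E ` I) = K"
  proof
    show "\<Union> (nb K E ` I) \<subseteq> K" using nbK by blast
    show "K \<subseteq> \<Union> (nb K E ` I)"
    proof
      fix k assume k: "k \<in> K"
      then obtain u where "u \<in> I" "E u k" using actK[OF active k] by blast
      then have "k \<in> nb K E u" using k unfolding nb_def by blast
      then show "k \<in> \<Union> (nb K E ` I)" using \<open>u \<in> I\<close> by blast
    qed
  qed
  show "\<forall>k\<in>K. \<exists>C\<in>nb K E ` I. k \<notin> C"
  proof
    fix k assume k: "k \<in> K"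
    then obtain v where "v \<in> I" "\<not> E v k" using actK[OF active k] by blast
    then have "k \<notin> nb K E v" unfolding nb_def by blast
    then show "\<exists>C\<in>nb K E ` I. k \<notin> C" using \<open>v \<in> I\<close> by blast
  qed
  fix A B assume A: "A \<in> nb K E ` I" and B: "B \<in> nb K E ` I" and AB: "A \<noteq> B"
  then obtain u v where uv: "u \<in> I" "v \<in> I" "A = nb K E u" "B = nb K E v" by blast
  then have "u \<noteq> v" using AB by blast
  then have "factor_adj V E I u v" using adjF uv AB by blast
  then show "\<exists>a b. A - B = {a} \<and> B - A = {b}" using adj_near[OF simpl] uv by blast
qed

lemma part1: "V \<noteq> {} \<Longrightarrow> card K \<le> card I"
  using cardF card_image_le[OF finI] by metis

lemma cliqS: assumes "V \<noteq> {}" shows "clique_number V E = card K"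
  unfolding clique_number_def
proof (rule Max_eqI)
  show "finite {card C |C. C \<subseteq> V \<and> is_clique E C}"
  proof (rule finite_subset[of _ "card ` Pow V"])
    show "{card C |C. C \<subseteq> V \<and> is_clique E C} \<subseteq> card ` Pow V" by blast
    show "finite (card ` Pow V)" using finV by simp
  qed
  show "card K \<in> {card C |C. C \<subseteq> V \<and> is_clique E C}"
    using KIV split unfolding split_graph_def by blast
  fix y assume "y \<in> {card C |C. C \<subseteq> V \<and> is_clique E C}"
  then obtain C where C: "y = card C" "C \<subseteq> V" "is_clique E C" by blast
  have finC: "finite C" using C(2) finV finite_subset by blast
  show "y \<le> card K"
  proof (cases "C \<inter> I = {}")
    case True
    then have "C \<subseteq> K" using C(2) KIV by blast
    then show ?thesis using C(1) card_mono[OF finK] by blast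
  next
    case False
    then obtain u where u: "u \<in> C" "u \<in> I" by blast
    have sub: "C - {u} \<subseteq> nb K E u"
    proof
      fix x assume x: "x \<in> C - {u}"
      then have "E x u" using C(3) u unfolding is_clique_def by blast
      then have Eux: "E u x" using symE by blast
      then have "x \<notin> I" using indI u by blast
      then have "x \<in> K" using x C(2) KIV by blast
      then show "x \<in> nb K E u" using Eux unfolding nb_def by blast
    qed
    obtain k where k: "k \<in> K" "\<not> E u k" using actI[OF active u(2)] by blast
    have "k \<notin> nb K E u" using k unfolding nb_def by blast
    then have "nb K E u \<subset> K" using nbK[of u] k(1) by blast
    then have "card (nb K E u) < card K" by (rule psubset_card_mono[OF finK])
    moreover have "card (C - {u}) \<le> card (nb K E u)" using card_mono[OF finnb sub] .
    moreover have "card (C - {u}) = card C - 1" using card_Diff_singleton[OF u(1)] .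
    moreover have "card C > 0" using finC u(1) card_gt_0_iff by blast
    ultimately show ?thesis using C(1) by linarith
  qed
qed

lemma cliqPhi: assumes "V \<noteq> {}" shows "clique_number I (factor_adj V E I) = card K"
proof -
  let ?F = "nb K E ` I"
  have finF: "finite ?F" using finI by simp
  have "Max {card C |C. C \<subseteq> I \<and> is_clique (factor_adj V E I) C} = card ?F"
  proof (rule Max_eqI)
    show "finite {card C |C. C \<subseteq> I \<and> is_clique (factor_adj V E I) C}"
    proof (rule finite_subset[of _ "card ` Pow I"])
      show "{card C |C. C \<subseteq> I \<and> is_clique (factor_adj V E I) C} \<subseteq> card ` Pow I" by blast
      show "finite (card ` Pow I)" using finI by simp
    qed
    fix y assume "y \<in> {card C |C. C \<subseteq> I \<and> is_clique (factor_adj V E I) C}"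
    then obtain C where C: "y = card C" "C \<subseteq> I" "is_clique (factor_adj V E I) C" by blast
    have "inj_on (nb K E) C"
    proof (rule inj_onI)
      fix x z assume xz: "x \<in> C" "z \<in> C" "nb K E x = nb K E z"
      show "x = z"
      proof (rule ccontr)
        assume "x \<noteq> z"
        then have "factor_adj V E I x z" using C(3) xz unfolding is_clique_def by blast
        moreover have "x \<in> I" "z \<in> I" using C(2) xz by auto
        ultimately show False using adjF[of x z] xz(3) \<open>x \<noteq> z\<close> by blast
      qed
    qed
    then have "card C = card (nb K E ` C)" by (simp add: card_image)
    also have "\<dots> \<le> card ?F" using C(2) by (intro card_mono[OF finF] image_mono)
    finally show "y \<le> card ?F" using C(1) by simp
  next
    let ?C0 = "inv_into I (nb K E) ` ?F"
    have C0I: "?C0 \<subseteq> I"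
    proof
      fix x assume "x \<in> ?C0"
      then obtain A where A: "A \<in> ?F" "x = inv_into I (nb K E) A" by (rule imageE)
      show "x \<in> I" unfolding A(2) by (rule inv_into_into[OF A(1)])
    qed
    have "inj_on (inv_into I (nb K E)) ?F" by (rule inj_on_inv_into[OF subset_refl])
    then have cC0: "card ?C0 = card ?F" by (simp add: card_image)
    have "is_clique (factor_adj V E I) ?C0" unfolding is_clique_def
    proof (intro ballI impI)
      fix x y assume x: "x \<in> ?C0" and y: "y \<in> ?C0" and xy: "x \<noteq> y"
      obtain A where A: "A \<in> ?F" "x = inv_into I (nb K E) A" using x by blast
      obtain B where B: "B \<in> ?F" "y = inv_into I (nb K E) B" using y by blast
      have "nb K E x = A" using f_inv_into_f[of A "nb K E" I] A by simp
      moreover have "nb K E y = B" using f_inv_into_f[of B "nb K E" I] B by simp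
      moreover have "A \<noteq> B" using A B xy by blast
      moreover have "x \<in> I" "y \<in> I" using C0I x y by auto
      ultimately show "factor_adj V E I x y" using adjF[of x y] xy by simp
    qed
    then show "card ?F \<in> {card C |C. C \<subseteq> I \<and> is_clique (factor_adj V E I) C}"
      using C0I cC0 by (metis (mono_tags, lifting) mem_Collect_eq)
  qed
  then show ?thesis unfolding clique_number_def using cardF[OF assms] by simp
qed

definition "Pairs = {P. P \<subseteq> I \<and> card P = 2 \<and> card (nb K E ` P) = 2}"
definition "T2 = {P. P \<subseteq> I \<and> card P = 2}"

lemma P4set_inj:
  assumes X: "X \<subseteq> V" "induces_P4 E X" "u \<in> X" "v \<in> X" and Y: "Y \<subseteq> V" "induces_P4 E Y" "u \<in> Y" "v \<in> Y"
    and uv: "u \<in> I" "v \<in> I" "u \<noteq> v"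
  shows "X = Y"
proof -
  let ?S = "{X. X \<subseteq> V \<and> induces_P4 E X \<and> u \<in> X \<and> v \<in> X}"
  have fin: "finite ?S" by (rule fin_sig)
  have "sigma V E u v \<le> 1" using simpl uv unfolding factor_simple_def by blast
  then have le: "card ?S \<le> Suc 0" unfolding sigma_def by simp
  have m1: "X \<in> ?S" using X by simp
  have m2: "Y \<in> ?S" using Y by simp
  have all: "\<forall>x\<in>?S. \<forall>y\<in>?S. x = y" using card_le_Suc0_iff_eq[OF fin] le by simp
  show "X = Y" using bspec[OF bspec[OF all m1] m2] .
qed

lemma card_pair_img: "card (f ` {u, v}) = 2 \<longleftrightarrow> f u \<noteq> f v"
proof (cases "f u = f v")
  case True then show ?thesis by simp
next
  case False then show ?thesis by simp
qed

lemma deg_Pairs: "deg V E = card Pairs"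
proof -
  let ?P4 = "{X. X \<subseteq> V \<and> induces_P4 E X}"
  have "bij_betw (\<lambda>X. X \<inter> I) ?P4 Pairs"
  proof (rule bij_betw_imageI)
    show "inj_on (\<lambda>X. X \<inter> I) ?P4"
    proof (rule inj_onI)
      fix X Y assume X: "X \<in> ?P4" and Y: "Y \<in> ?P4" and eq: "X \<inter> I = Y \<inter> I"
      have Xs: "X \<subseteq> V" "induces_P4 E X" using X by auto
      have Ys: "Y \<subseteq> V" "induces_P4 E Y" using Y by auto
      obtain u b c v where P: "X = {u,b,c,v}" "u \<in> I" "v \<in> I" "b \<in> K" "c \<in> K" "u \<noteq> v" "b \<noteq> c"
    "E u b" "E b c" "E c v" "\<not> E u c" "\<not> E b v"
        by (rule P4_struct[OF Xs])
      have uX: "u \<in> X" "v \<in> X" unfolding P(1) by simp_all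
      have "u \<in> X \<inter> I" "v \<in> X \<inter> I" using uX P(2,3) by simp_all
      then have uY: "u \<in> Y" "v \<in> Y" unfolding eq by simp_all
      show "X = Y" by (rule P4set_inj[OF Xs uX Ys uY P(2,3,6)])
    qed
    show "(\<lambda>X. X \<inter> I) ` ?P4 = Pairs"
    proof
      show "(\<lambda>X. X \<inter> I) ` ?P4 \<subseteq> Pairs"
      proof
        fix Z assume "Z \<in> (\<lambda>X. X \<inter> I) ` ?P4"
        then obtain X where X: "X \<in> ?P4" "Z = X \<inter> I" by blast
        have Xs: "X \<subseteq> V" "induces_P4 E X" using X by auto
        obtain u b c v where P0: "X = {u,b,c,v}" "u \<in> I" "v \<in> I" "b \<in> K" "c \<in> K" "u \<noteq> v" "b \<noteq> c"
    "E u b" "E b c" "E c v" "\<not> E u c" "\<not> E b v"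
          by (rule P4_struct[OF Xs])
        note P = P0(1-6,8,12)
        have Z: "Z = {u,v}" using X(2) P(1) P4_inter[OF P(4,5,2,3)] by simp
        have "\<not> E v b" using P(8) symE by blast
        then have "b \<notin> nb K E v" unfolding nb_def by blast
        moreover have "b \<in> nb K E u" using P(4,7) unfolding nb_def by blast
        ultimately have "nb K E u \<noteq> nb K E v" by blast
        then have "card (nb K E ` Z) = 2" unfolding Z card_pair_img by simp
        moreover have "card Z = 2" using Z P(6) by simp
        moreover have "Z \<subseteq> I" using X(2) by blast
        ultimately show "Z \<in> Pairs" unfolding Pairs_def by blast
      qed
      show "Pairs \<subseteq> (\<lambda>X. X \<inter> I) ` ?P4"
      proof
        fix Z assume "Z \<in> Pairs"
        then have Z: "Z \<subseteq> I" "card Z = 2" "card (nb K E ` Z) = 2" unfolding Pairs_def by auto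
        then obtain u v where uv: "Z = {u,v}" "u \<noteq> v" using card_2_iff by metis
        have uvI: "u \<in> I" "v \<in> I" using Z(1) uv(1) by auto
        have "nb K E u \<noteq> nb K E v" using Z(3) unfolding uv(1) card_pair_img .
        then have "factor_adj V E I u v" using adjF[OF uvI uv(2)] by blast
        then obtain X where X: "X \<subseteq> V" "induces_P4 E X" "u \<in> X" "v \<in> X" using adj_iff_P4[of u v] by blast
        obtain u' b c v' where P: "X = {u',b,c,v'}" "u' \<in> I" "v' \<in> I" "b \<in> K" "c \<in> K" "u' \<noteq> v'" "b \<noteq> c"
    "E u' b" "E b c" "E c v'" "\<not> E u' c" "\<not> E b v'"
          by (rule P4_struct[OF X(1,2)])
        have XI: "X \<inter> I = {u',v'}" using P(1) P4_inter[OF P(4,5,2,3)] by simp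
        have "u \<in> {u',v'}" "v \<in> {u',v'}" using X(3,4) uvI XI by auto
        then have "{u',v'} = {u,v}" using uv(2) by auto
        then have "Z = X \<inter> I" using XI uv(1) by simp
        moreover have "X \<in> ?P4" using X by simp
        ultimately show "Z \<in> (\<lambda>X. X \<inter> I) ` ?P4" by blast
      qed
    qed
  qed
  then have "card ?P4 = card Pairs" by (rule bij_betw_same_card)
  then show ?thesis unfolding deg_def .
qed

lemma finT2: "finite T2"
proof (rule finite_subset[of _ "Pow I"])
  show "T2 \<subseteq> Pow I" unfolding T2_def by blast
  show "finite (Pow I)" using finI by simp
qed

lemma cardT2: "card T2 = card I choose 2"
  unfolding T2_def by (rule n_subsets[OF finI])

lemma Pairs_T2: "Pairs \<subseteq> T2" unfolding Pairs_def T2_def by blast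

lemma part3: "graph_complete I (factor_adj V E I) \<Longrightarrow> deg V E = card I choose 2"
proof -
  assume comp: "graph_complete I (factor_adj V E I)"
  have "T2 \<subseteq> Pairs"
  proof
    fix Z assume "Z \<in> T2"
    then have Z: "Z \<subseteq> I" "card Z = 2" unfolding T2_def by auto
    then obtain u v where uv: "Z = {u,v}" "u \<noteq> v" using card_2_iff by metis
    have uvI: "u \<in> I" "v \<in> I" using Z(1) uv(1) by auto
    then have "factor_adj V E I u v" using comp uv(2) unfolding graph_complete_def by blast
    then have "nb K E u \<noteq> nb K E v" using adjF[OF uvI uv(2)] by blast
    then have "card (nb K E ` Z) = 2" unfolding uv(1) card_pair_img .
    then show "Z \<in> Pairs" using Z unfolding Pairs_def by blast
  qed
  then have "Pairs = T2" using Pairs_T2 by blast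
  then show ?thesis using deg_Pairs cardT2 by simp
qed

lemma part4a: "\<not> graph_complete I (factor_adj V E I) \<Longrightarrow> deg V E < card I choose 2"
proof -
  assume "\<not> graph_complete I (factor_adj V E I)"
  then obtain u v where uv: "u \<in> I" "v \<in> I" "u \<noteq> v" "\<not> factor_adj V E I u v"
    unfolding graph_complete_def by blast
  then have "nb K E u = nb K E v" using adjF[OF uv(1-3)] by blast
  then have "card (nb K E ` {u,v}) \<noteq> 2" unfolding card_pair_img by blast
  then have "{u,v} \<notin> Pairs" unfolding Pairs_def by blast
  moreover have "{u,v} \<in> T2" using uv unfolding T2_def by simp
  ultimately have "Pairs \<subset> T2" using Pairs_T2 by blast
  then have "card Pairs < card T2" by (rule psubset_card_mono[OF finT2])
  then show ?thesis using deg_Pairs cardT2 by simp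
qed

lemma fib_card:
  assumes "card P = 2"
  shows "card {(x,y). x \<in> P \<and> y \<in> P \<and> x \<noteq> y} \<le> 2"
proof -
  obtain a b where ab: "P = {a,b}" "a \<noteq> b" using assms card_2_iff by metis
  have "{(x,y). x \<in> P \<and> y \<in> P \<and> x \<noteq> y} \<subseteq> {(a,b),(b,a)}" using ab by auto
  then have "card {(x,y). x \<in> P \<and> y \<in> P \<and> x \<noteq> y} \<le> card {(a,b),(b,a)}"
    by (rule card_mono[rotated]) simp
  also have "\<dots> \<le> 2" using ab(2) by simp
  finally show ?thesis .
qed

lemma part4b: assumes "V \<noteq> {}" shows "card I * (card K - 1) \<le> 2 * deg V E"
proof -
  let ?F = "nb K E ` I"
  let ?N = "\<lambda>u. {v \<in> I. nb K E v \<noteq> nb K E u}"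
  define Q where "Q = Sigma I ?N"
  define fib :: "'a set \<Rightarrow> ('a \<times> 'a) set" where "fib = (\<lambda>P. {(x,y). x \<in> P \<and> y \<in> P \<and> x \<noteq> y})"
  have finN: "finite (?N u)" for u using finI by simp
  have cQ: "card Q = (\<Sum>u\<in>I. card (?N u))" unfolding Q_def using finI finN by simp
  have each: "card K - 1 \<le> card (?N u)" if u: "u \<in> I" for u
  proof -
    have "nb K E ` ?N u = ?F - {nb K E u}" by blast
    moreover have "card (?F - {nb K E u}) = card ?F - 1" using u by (simp add: card_Diff_singleton)
    moreover have "card (nb K E ` ?N u) \<le> card (?N u)" by (rule card_image_le[OF finN])
    ultimately show ?thesis using cardF[OF assms] by simp
  qed
  have "card I * (card K - 1) \<le> (\<Sum>u\<in>I. card (?N u))"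
    using sum_bounded_below[of I "card K - 1" "\<lambda>u. card (?N u)"] each by simp
  also have "\<dots> = card Q" using cQ by simp
  also have "card Q \<le> card (\<Union>P\<in>Pairs. fib P)"
  proof (rule card_mono)
    have finP: "finite Pairs" using finite_subset[OF Pairs_T2 finT2] .
    have "finite (fib P)" if "P \<in> Pairs" for P
    proof -
      have "card P = 2" using that unfolding Pairs_def by blast
      then have "finite P" by (intro card_ge_0_finite) simp
      then have "finite (P \<times> P)" by simp
      moreover have "fib P \<subseteq> P \<times> P" unfolding fib_def by blast
      ultimately show ?thesis using finite_subset by blast
    qed
    then show "finite (\<Union>P\<in>Pairs. fib P)" using finP by blast
    show "Q \<subseteq> (\<Union>P\<in>Pairs. fib P)"
    proof
      fix z assume "z \<in> Q"
      then obtain u v where z: "z = (u,v)" "u \<in> I" "v \<in> I" "nb K E v \<noteq> nb K E u" unfolding Q_def by blast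
      then have uv: "u \<noteq> v" by blast
      have "card (nb K E ` {u,v}) = 2" unfolding card_pair_img using z(4) by simp
      moreover have "card {u,v} = 2" using uv by simp
      moreover have "{u,v} \<subseteq> I" using z by simp
      ultimately have "{u,v} \<in> Pairs" unfolding Pairs_def by blast
      moreover have "z \<in> fib {u,v}" unfolding fib_def z(1) using uv by simp
      ultimately show "z \<in> (\<Union>P\<in>Pairs. fib P)" by blast
    qed
  qed
  also have "\<dots> \<le> (\<Sum>P\<in>Pairs. card (fib P))"
    by (rule card_UN_le[OF finite_subset[OF Pairs_T2 finT2]])
  also have "\<dots> \<le> (\<Sum>P\<in>Pairs. 2)"
  proof (rule sum_mono)
    fix P assume "P \<in> Pairs"
    then have "card P = 2" unfolding Pairs_def by blast
    then show "card (fib P) \<le> 2" unfolding fib_def by (rule fib_card)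
  qed
  also have "\<dots> = 2 * card Pairs" by simp
  also have "\<dots> = 2 * deg V E" using deg_Pairs by simp
  finally show ?thesis .
qed

end

end

lemma empty_case:
  assumes split: "split_graph V E K I" and V: "V = {}"
  shows "card K \<le> card I
    \<and> clique_number V E = clique_number I (factor_adj V E I)
    \<and> (graph_complete I (factor_adj V E I) \<longrightarrow> deg V E = card I choose 2)
    \<and> (\<not> graph_complete I (factor_adj V E I) \<longrightarrow>
           ceiling (real (card I) / 2 * (real (card K) - 1)) \<le> int (deg V E)
           \<and> deg V E < card I choose 2)"
proof -
  have KI: "K = {}" "I = {}" using split V unfolding split_graph_def by auto
  have c0: "{card C |C. C \<subseteq> ({}::'a set) \<and> is_clique R C} = {0}" for R
    unfolding is_clique_def by auto
  have e0: "{X. X \<subseteq> V \<and> induces_P4 E X} = {}" unfolding V induces_P4_def by auto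
  have "clique_number V E = 0" unfolding clique_number_def V c0 by simp
  moreover have "clique_number I (factor_adj V E I) = 0" unfolding clique_number_def KI c0 by simp
  moreover have "deg V E = 0" unfolding deg_def e0 by simp
  moreover have "graph_complete I (factor_adj V E I)" unfolding graph_complete_def KI by simp
  ultimately show ?thesis using KI by simp
qed

theorem corollary5p3:
  fixes V K I :: "'a set" and E :: "'a \<Rightarrow> 'a \<Rightarrow> bool"
  assumes split: "split_graph V E K I"
    and active: "active_graph V E"
    and simp: "factor_simple V E I"
    and conn: "graph_connected I (factor_adj V E I)"
  shows "card K \<le> card I
    \<and> clique_number V E = clique_number I (factor_adj V E I)
    \<and> (graph_complete I (factor_adj V E I) \<longrightarrow> deg V E = card I choose 2)
    \<and> (\<not> graph_complete I (factor_adj V E I) \<longrightarrow>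
           ceiling (real (card I) / 2 * (real (card K) - 1)) \<le> int (deg V E)
           \<and> deg V E < card I choose 2)"
proof (cases "V = {}")
  case True
  then show ?thesis by (rule empty_case[OF split])
next
  case False
  have p1: "card K \<le> card I" by (rule part1[OF split active simp conn False])
  have p2: "clique_number V E = clique_number I (factor_adj V E I)"
    using cliqS[OF split active simp conn False] cliqPhi[OF split active simp conn False] by simp
  have p3: "graph_complete I (factor_adj V E I) \<longrightarrow> deg V E = card I choose 2"
    using part3[OF split active simp conn] by blast
  have p4a: "\<not> graph_complete I (factor_adj V E I) \<longrightarrow> deg V E < card I choose 2"
    using part4a[OF split active simp conn] by blast
  have nat_ineq: "card I * (card K - 1) \<le> 2 * deg V E" by (rule part4b[OF split active simp conn False])
  have Kne: "K \<noteq> {}" using Vne[OF split active False] by blast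
  then have K1: "card K \<ge> 1" using finK[OF split] by (simp add: Suc_le_eq card_gt_0_iff)
  have "real (card I) * (real (card K) - 1) = real (card I * (card K - 1))"
    using K1 by (simp add: of_nat_diff)
  also have "\<dots> \<le> real (2 * deg V E)" using nat_ineq by (simp only: of_nat_le_iff)
  finally have "real (card I) * (real (card K) - 1) \<le> 2 * real (deg V E)" by simp
  then have "real (card I) / 2 * (real (card K) - 1) \<le> of_int (int (deg V E))" by simp
  then have "ceiling (real (card I) / 2 * (real (card K) - 1)) \<le> int (deg V E)" by (rule ceiling_le)
  then show ?thesis using p1 p2 p3 p4a by blast
qed

end
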